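(* Let $q$ be a prime power and $n,t,m$ positive integers with $t\geq m$. Let $\ell$ be a positive integer such that $$ {\ell+s\choose t}\left(\frac{m}{q}\right)^{n}<s+1 $$ for some integer $s\geq 0$. Then $EGZ(t,\mathbb{F}_q^{n},m) > \ell$.
   Context: $\mathbb{F}_q^n$ is viewed as a commutative ring with coordinatewise operations. For elements $g_1,\dots,g_t$ of a commutative ring $R$, $e_m(g_1,\dots,g_t)=\sum_{1\leq i_1<\cdots<i_m\leq t}\prod_{j=1}^m g_{i_j}$. A sequence over $R$ is a finite list of elements of $R$ (repetitions allowed); a subsequence of length $t$ is obtained by choosing $t$ distinct positions. For a finite commutative ring $R$, $EGZ(t,R,m)$ is the smallest positive integer $\ell$ such that every sequence $S$ over $R$ of length $|S|\geq \ell$ contains a subsequence $S'$ of length $t$ with $e_m(S')=0$ in $R$; if no such $\ell$ exists, $EGZ(t,R,m)=\infty$. *)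

theory Defs
  imports "HOL-Analysis.Analysis" "HOL-Library.Extended_Nat"
begin

definition esym_pos :: "nat \<Rightarrow> 'r::comm_ring_1 list \<Rightarrow> nat set \<Rightarrow> 'r" where
  "esym_pos m S I = (\<Sum>J\<in>{J. J \<subseteq> I \<and> card J = m}. \<Prod>j\<in>J. S ! j)"

definition EGZ_prop :: "nat \<Rightarrow> 'r::comm_ring_1 itself \<Rightarrow> nat \<Rightarrow> nat \<Rightarrow> bool" where
  "EGZ_prop t R m L \<longleftrightarrow>
     (\<forall>S :: 'r list. length S \<ge> L \<longrightarrow>
        (\<exists>I. I \<subseteq> {..<length S} \<and> card I = t \<and> esym_pos m S I = 0))"

definition EGZ :: "nat \<Rightarrow> 'r::comm_ring_1 itself \<Rightarrow> nat \<Rightarrow> enat" where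
  "EGZ t R m = (if \<exists>L>0. EGZ_prop t R m L
                then enat (LEAST L. L > 0 \<and> EGZ_prop t R m L) else \<infinity>)"

end

theory Submission
  imports Defs
begin

lemma prod_component_vec: "prod f A $ i = (\<Prod>x\<in>A. f x $ i)"
  for f :: "'b \<Rightarrow> 'a::comm_ring_1 ^ 'n"
  by (induction A rule: infinite_finite_induct) auto

definition es :: "nat set \<Rightarrow> nat \<Rightarrow> (nat \<Rightarrow> 'a::comm_ring_1) \<Rightarrow> 'a" where
  "es I m g = (\<Sum>J\<in>{J. J \<subseteq> I \<and> card J = m}. \<Prod>j\<in>J. g j)"

lemma es_0: "finite I \<Longrightarrow> es I 0 g = 1"
proof -
  assume "finite I"
  then have "{J. J \<subseteq> I \<and> card J = 0} = {{}}" by (auto simp: card_eq_0_iff dest: finite_subset)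
  then show ?thesis by (simp add: es_def)
qed

lemma es_cong: "(\<And>x. x \<in> I \<Longrightarrow> g x = g' x) \<Longrightarrow> es I m g = es I m g'"
  unfolding es_def by (intro sum.cong refl prod.cong) auto

lemma subsets_insert:
  assumes "finite I" "a \<notin> I" "m > 0"
  shows "{J. J \<subseteq> insert a I \<and> card J = m} =
     {J. J \<subseteq> I \<and> card J = m} \<union> insert a ` {J. J \<subseteq> I \<and> card J = m - 1}"
proof (intro equalityI subsetI)
  fix J assume J: "J \<in> {J. J \<subseteq> insert a I \<and> card J = m}"
  show "J \<in> {J. J \<subseteq> I \<and> card J = m} \<union> insert a ` {J. J \<subseteq> I \<and> card J = m - 1}"
  proof (cases "a \<in> J")
    case True
    have "finite J" using J assms finite_subset by blast
    then have "card (J - {a}) = m - 1" using J True by auto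
    moreover have "J = insert a (J - {a})" using True by auto
    ultimately show ?thesis using J by blast
  next
    case False then show ?thesis using J by blast
  qed
next
  fix J assume J: "J \<in> {J. J \<subseteq> I \<and> card J = m} \<union> insert a ` {J. J \<subseteq> I \<and> card J = m - 1}"
  then show "J \<in> {J. J \<subseteq> insert a I \<and> card J = m}"
  proof
    assume "J \<in> insert a ` {J. J \<subseteq> I \<and> card J = m - 1}"
    then obtain J0 where "J = insert a J0" "J0 \<subseteq> I" "card J0 = m - 1" by auto
    moreover have "finite J0" using \<open>J0 \<subseteq> I\<close> assms finite_subset by blast
    moreover have "a \<notin> J0" using \<open>J0 \<subseteq> I\<close> assms by auto
    ultimately show ?thesis using assms by auto
  qed auto
qed

lemma es_insert:
  assumes "finite I" "a \<notin> I" "m > 0"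
  shows "es (insert a I) m g = g a * es I (m - 1) g + es I m g"
proof -
  have disj: "{J. J \<subseteq> I \<and> card J = m} \<inter> insert a ` {J. J \<subseteq> I \<and> card J = m - 1} = {}"
    using assms by auto
  have inj: "inj_on (insert a) {J. J \<subseteq> I \<and> card J = m - 1}"
    unfolding inj_on_def using assms by (metis (mono_tags, lifting) insert_ident mem_Collect_eq subset_iff)
  have fin1: "finite {J. J \<subseteq> I \<and> card J = m}" using assms by simp
  have fin2: "finite (insert a ` {J. J \<subseteq> I \<and> card J = m - 1})" using assms by simp
  have "es (insert a I) m g = (\<Sum>J\<in>{J. J \<subseteq> I \<and> card J = m}. \<Prod>j\<in>J. g j)
      + (\<Sum>J\<in>insert a ` {J. J \<subseteq> I \<and> card J = m - 1}. \<Prod>j\<in>J. g j)"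
    unfolding es_def subsets_insert[OF assms] by (rule sum.union_disjoint[OF fin1 fin2 disj])
  also have "(\<Sum>J\<in>insert a ` {J. J \<subseteq> I \<and> card J = m - 1}. \<Prod>j\<in>J. g j)
      = (\<Sum>J\<in>{J. J \<subseteq> I \<and> card J = m - 1}. \<Prod>j\<in>insert a J. g j)"
    by (rule sum.reindex[OF inj, unfolded comp_def])
  also have "\<dots> = (\<Sum>J\<in>{J. J \<subseteq> I \<and> card J = m - 1}. g a * (\<Prod>j\<in>J. g j))"
  proof (rule sum.cong[OF refl])
    fix J assume "J \<in> {J. J \<subseteq> I \<and> card J = m - 1}"
    then have "finite J" "a \<notin> J" using assms finite_subset by auto
    then show "(\<Prod>j\<in>insert a J. g j) = g a * (\<Prod>j\<in>J. g j)" by simp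
  qed
  also have "\<dots> = g a * es I (m - 1) g" by (simp add: es_def sum_distrib_left)
  finally show ?thesis by (simp add: es_def)
qed


lemma card_lin_sols:
  fixes A B :: "'a::{field,finite}"
  shows "card {y. y * A + B = 0} \<le> (if A = 0 then CARD('a) else 1)"
proof (cases "A = 0")
  case True then show ?thesis by (simp add: card_mono)
next
  case False
  then have "{y. y * A + B = 0} = {- B / A}" by (auto simp: field_simps eq_neg_iff_add_eq_0)
  then show ?thesis using False by simp
qed

lemma sum_ind_card: "finite A \<Longrightarrow> (\<Sum>g\<in>A. (1::nat) + q * (if P g then 1 else 0)) = card A + q * card {g\<in>A. P g}"
proof -
  assume f: "finite A"
  have "(\<Sum>g\<in>A. (1::nat) + q * (if P g then 1 else 0)) = (\<Sum>g\<in>A. (1::nat)) + q * (\<Sum>g\<in>A. if P g then 1 else 0)"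
    by (simp only: sum.distrib sum_distrib_left)
  also have "(\<Sum>g\<in>A. if P g then 1 else (0::nat)) = card {g\<in>A. P g}"
    using f by (simp add: sum.If_cases Int_def conj_commute)
  finally show ?thesis by simp
qed

lemma zeros_bound:
  assumes "finite I"
  shows "\<forall>K m. finite K \<longrightarrow> I \<subseteq> K \<longrightarrow> 1 \<le> m \<longrightarrow> m \<le> card I \<longrightarrow>
    card {g \<in> PiE K (\<lambda>_. UNIV::'a::{field,finite} set). es I m g = 0} \<le> m * CARD('a) ^ (card K - 1)"
  using assms
proof (induction I rule: finite_induct)
  case empty then show ?case by simp
next
  case (insert a I)
  show ?case
  proof (intro allI impI)
    fix K m assume K: "finite K" "insert a I \<subseteq> K" "1 \<le> m" "m \<le> card (insert a I)"
    define K' where "K' = K - {a}"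
    have KK: "K = insert a K'" "a \<notin> K'" "finite K'" "I \<subseteq> K'" using K insert.hyps by (auto simp: K'_def)
    have cK: "card K' = card K - 1" using KK by simp
    let ?U = "UNIV :: 'a set"
    let ?q = "CARD('a)"
    define P where "P (g::nat\<Rightarrow>'a) (y::'a) \<longleftrightarrow> y * es I (m - 1) g + es I m g = 0" for g y
    let ?Z = "{g \<in> PiE K (\<lambda>_. ?U). es (insert a I) m g = 0}"
    let ?S = "SIGMA g:PiE K' (\<lambda>_. ?U). {y. P g y}"
    have esupd: "es I k (g(a := y)) = es I k g" for k and g :: "nat \<Rightarrow> 'a" and y
      by (rule es_cong) (use insert.hyps in auto)
    have Zeq: "?Z = (\<lambda>(g, y). g(a := y)) ` ?S"
    proof (intro equalityI subsetI)
      fix f assume f: "f \<in> ?Z"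
      let ?g = "f(a := undefined)"
      have "?g \<in> PiE K' (\<lambda>_. ?U)" using fun_upd_in_PiE[of a K' f "\<lambda>_. ?U"] f KK by simp
      moreover have "P ?g (f a)"
        using f es_insert[OF insert.hyps, of m f] K esupd[of _ f undefined] by (simp add: P_def)
      moreover have "f = ?g(a := f a)" by simp
      ultimately show "f \<in> (\<lambda>(g, y). g(a := y)) ` ?S" by (intro rev_image_eqI[of "(?g, f a)"]) auto
    next
      fix f assume "f \<in> (\<lambda>(g, y). g(a := y)) ` ?S"
      then obtain g y where gy: "f = g(a := y)" "g \<in> PiE K' (\<lambda>_. ?U)" "P g y" by auto
      have "f \<in> PiE K (\<lambda>_. ?U)" using PiE_fun_upd[of y "\<lambda>_. ?U" a g K'] gy KK by simp
      moreover have "es (insert a I) m f = 0"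
      proof -
        have "es (insert a I) m f = f a * es I (m - 1) f + es I m f"
          by (rule es_insert[OF insert.hyps]) (use K in simp)
        also have "\<dots> = y * es I (m - 1) g + es I m g" using gy(1) esupd by simp
        also have "\<dots> = 0" using gy(3) P_def by simp
        finally show ?thesis .
      qed
      ultimately show "f \<in> ?Z" by simp
    qed
    have inj: "inj_on (\<lambda>(g, y). g(a := y)) ?S"
    proof (rule inj_onI, clarify)
      fix g1 y1 g2 y2
      assume h: "g1 \<in> PiE K' (\<lambda>_. ?U)" "g2 \<in> PiE K' (\<lambda>_. ?U)" "g1(a := y1) = g2(a := y2)"
      from h(3) have "y1 = y2" by (metis fun_upd_same)
      moreover have "g1 = g2"
      proof
        fix x show "g1 x = g2 x"
        proof (cases "x = a")
          case True then show ?thesis using h KK by (simp add: PiE_def extensional_def)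
        next
          case False then show ?thesis using h(3) by (metis fun_upd_other)
        qed
      qed
      ultimately show "g1 = g2 \<and> y1 = y2" by simp
    qed
    have finPi: "finite (PiE K' (\<lambda>_. ?U))" using KK by (simp add: finite_PiE)
    have "card ?Z = card ?S" unfolding Zeq by (rule card_image[OF inj])
    also have "\<dots> = (\<Sum>g\<in>PiE K' (\<lambda>_. ?U). card {y. P g y})"
      using finPi by (intro card_SigmaI) auto
    also have "\<dots> \<le> (\<Sum>g\<in>PiE K' (\<lambda>_. ?U). 1 + ?q * (if es I (m - 1) g = 0 then 1 else 0))"
    proof (rule sum_mono)
      fix g
      have "card {y. P g y} \<le> (if es I (m - 1) g = 0 then ?q else 1)"
        unfolding P_def by (rule card_lin_sols)
      then show "card {y. P g y} \<le> 1 + ?q * (if es I (m - 1) g = 0 then 1 else 0)"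
        by (auto split: if_splits)
    qed
    also have "\<dots> = card (PiE K' (\<lambda>_. ?U)) + ?q * card {g \<in> PiE K' (\<lambda>_. ?U). es I (m - 1) g = 0}"
      by (rule sum_ind_card[OF finPi])
    also have "card (PiE K' (\<lambda>_. ?U)) = ?q ^ card K'"
      using KK by (simp add: card_PiE)
    finally have main: "card ?Z \<le> ?q ^ card K' + ?q * card {g \<in> PiE K' (\<lambda>_. ?U). es I (m - 1) g = 0}" .
    show "card ?Z \<le> m * ?q ^ (card K - 1)"
    proof (cases "m = 1")
      case True
      have e1: "es I 0 g = (1::'a)" for g :: "nat \<Rightarrow> 'a" by (simp add: es_0[OF insert.hyps(1)])
      have c0: "card {g \<in> PiE K' (\<lambda>_. ?U). es I (m - 1) g = 0} = 0" unfolding True by (simp add: e1)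
      show ?thesis using main[unfolded c0] True cK by simp
    next
      case False
      have "m - 1 \<le> card I" using K insert.hyps by simp
      then have IH: "card {g \<in> PiE K' (\<lambda>_. ?U). es I (m - 1) g = 0} \<le> (m - 1) * ?q ^ (card K' - 1)"
        using insert.IH[rule_format, of K' "m - 1"] KK False K by simp
      have "card I \<ge> 1" using \<open>m - 1 \<le> card I\<close> False K by linarith
      then have "card K' \<ge> 1" using card_mono[OF KK(3) KK(4)] by linarith
      then have pw: "?q * ?q ^ (card K' - 1) = ?q ^ card K'" by (cases "card K'") auto
      have "card ?Z \<le> ?q ^ card K' + ?q * ((m - 1) * ?q ^ (card K' - 1))"
        using main mult_le_mono2[OF IH, of ?q] by linarith
      also have "\<dots> = ?q ^ card K' + (m - 1) * ?q ^ card K'" using pw by (simp add: algebra_simps)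
      also have "\<dots> = m * ?q ^ card K'" using K by (cases m) auto
      finally show ?thesis using cK by simp
    qed
  qed
qed


definition toS :: "nat \<Rightarrow> ('n \<Rightarrow> nat \<Rightarrow> 'a) \<Rightarrow> ('a ^ 'n) list" where
  "toS N h = map (\<lambda>j. \<chi> k. h k j) [0..<N]"

lemma esym_toS:
  fixes h :: "'n::finite \<Rightarrow> nat \<Rightarrow> 'a::comm_ring_1"
  assumes "I \<subseteq> {..<N}"
  shows "esym_pos m (toS N h) I $ k = es I m (h k)"
  unfolding esym_pos_def es_def sum_component prod_component_vec
proof (rule sum.cong[OF refl], rule prod.cong[OF refl])
  fix J j assume "J \<in> {J. J \<subseteq> I \<and> card J = m}" "j \<in> J"
  then have "j < N" using assms by auto
  then show "toS N h ! j $ k = h k j" by (simp add: toS_def)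
qed

lemma esym_toS_zero:
  fixes h :: "'n::finite \<Rightarrow> nat \<Rightarrow> 'a::comm_ring_1"
  assumes "I \<subseteq> {..<N}"
  shows "esym_pos m (toS N h) I = 0 \<longleftrightarrow> (\<forall>k. es I m (h k) = 0)"
  by (simp add: esym_toS[OF assms] vec_eq_iff)

definition Seqs :: "nat \<Rightarrow> ('n::finite \<Rightarrow> nat \<Rightarrow> 'a::finite) set" where
  "Seqs N = PiE UNIV (\<lambda>_. PiE {..<N} (\<lambda>_. UNIV))"

lemma finite_Seqs: "finite (Seqs N)"
  unfolding Seqs_def by (simp add: finite_PiE)

lemma card_Seqs: "card (Seqs N :: ('n::finite \<Rightarrow> nat \<Rightarrow> 'a::finite) set) = (CARD('a) ^ N) ^ CARD('n)"
  unfolding Seqs_def by (simp add: card_PiE)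

lemma count_I:
  assumes "I \<subseteq> {..<N}" "card I = t" "1 \<le> m" "m \<le> t"
  shows "card {h \<in> (Seqs N :: ('n::finite \<Rightarrow> nat \<Rightarrow> 'a::{field,finite}) set). esym_pos m (toS N h) I = 0}
     \<le> (m * CARD('a) ^ (N - 1)) ^ CARD('n)"
proof -
  let ?Zs = "{g \<in> PiE {..<N} (\<lambda>_. UNIV::'a set). es I m g = 0}"
  have eq: "{h \<in> (Seqs N :: ('n \<Rightarrow> nat \<Rightarrow> 'a) set). esym_pos m (toS N h) I = 0} = PiE UNIV (\<lambda>_. ?Zs)"
    unfolding Seqs_def esym_toS_zero[OF assms(1)] by (auto simp: PiE_iff)
  have fI: "finite I" using assms(1) finite_subset by blast
  have "card ?Zs \<le> m * CARD('a) ^ (card {..<N} - 1)"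
    using zeros_bound[OF fI, rule_format, of "{..<N}" m] assms by simp
  then have Zb: "card ?Zs \<le> m * CARD('a) ^ (N - 1)" by simp
  have "card (PiE (UNIV::'n set) (\<lambda>_. ?Zs)) = card ?Zs ^ CARD('n)" by (simp add: card_PiE)
  also have "\<dots> \<le> (m * CARD('a) ^ (N - 1)) ^ CARD('n)" by (rule power_mono[OF Zb]) simp
  finally show ?thesis unfolding eq .
qed

lemma card_filter_sum: "finite A \<Longrightarrow> card {a\<in>A. P a} = (\<Sum>a\<in>A. if P a then 1 else (0::nat))"
  by (simp add: sum.If_cases Int_def conj_commute)

lemma double_count:
  assumes "finite A" "finite B"
  shows "(\<Sum>a\<in>A. card {b\<in>B. R a b}) = (\<Sum>b\<in>B. card {a\<in>A. R a b})"
  proof -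
  have "(\<Sum>a\<in>A. card {b\<in>B. R a b}) = (\<Sum>a\<in>A. \<Sum>b\<in>B. if R a b then 1 else (0::nat))"
    using assms(2) by (simp add: card_filter_sum)
  also have "\<dots> = (\<Sum>b\<in>B. \<Sum>a\<in>A. if R a b then 1 else (0::nat))" by (rule sum.swap)
  also have "\<dots> = (\<Sum>b\<in>B. card {a\<in>A. R a b})"
    using assms(1) by (simp add: card_filter_sum)
  finally show ?thesis .
qed


lemma exists_good:
  fixes s N t m :: nat
  assumes "N \<ge> 1" "1 \<le> m" "m \<le> t"
    and hyp: "real (N choose t) * (real m / real CARD('a)) ^ CARD('n) < real s + 1"
  shows "\<exists>h \<in> (Seqs N :: ('n::finite \<Rightarrow> nat \<Rightarrow> 'a::{field,finite}) set).
     card {I. I \<subseteq> {..<N} \<and> card I = t \<and> esym_pos m (toS N h) I = 0} \<le> s"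
proof (rule ccontr)
  assume "\<not> ?thesis"
  then have big: "\<forall>h\<in>(Seqs N :: ('n \<Rightarrow> nat \<Rightarrow> 'a) set).
     s + 1 \<le> card {I. I \<subseteq> {..<N} \<and> card I = t \<and> esym_pos m (toS N h) I = 0}" by auto
  let ?T = "{I. I \<subseteq> {..<N} \<and> card I = t}"
  let ?S = "Seqs N :: ('n \<Rightarrow> nat \<Rightarrow> 'a) set"
  let ?q = "CARD('a)" and ?n = "CARD('n)"
  let ?X = "(?q ^ (N - 1)) ^ ?n"
  have finT: "finite ?T" by simp
  have cardT: "card ?T = N choose t" using n_subsets[of "{..<N}" t] by simp
  have "(s + 1) * card ?S = (\<Sum>h\<in>?S. s + 1)" by simp
  also have "\<dots> \<le> (\<Sum>h\<in>?S. card {I\<in>?T. esym_pos m (toS N h) I = 0})"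
    by (rule sum_mono) (use big in \<open>auto simp: conj_assoc\<close>)
  also have "\<dots> = (\<Sum>I\<in>?T. card {h\<in>?S. esym_pos m (toS N h) I = 0})"
    by (rule double_count[OF finite_Seqs finT])
  also have "\<dots> \<le> (\<Sum>I\<in>?T. (m * ?q ^ (N - 1)) ^ ?n)"
    by (rule sum_mono) (use count_I assms in auto)
  also have "\<dots> = (N choose t) * (m ^ ?n * ?X)" using cardT by (simp add: power_mult_distrib)
  finally have ineq: "(s + 1) * card ?S \<le> (N choose t) * (m ^ ?n * ?X)" .
  have "card ?S = ?q ^ ?n * ?X" unfolding card_Seqs
    using assms(1) by (metis Suc_diff_1 less_le_trans zero_less_one power_Suc power_mult_distrib)
  with ineq have "((s + 1) * ?q ^ ?n) * ?X \<le> ((N choose t) * m ^ ?n) * ?X" by (simp add: algebra_simps)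
  moreover have "?X > 0" by simp
  ultimately have "(s + 1) * ?q ^ ?n \<le> (N choose t) * m ^ ?n" by simp
  then have "real (s + 1) * real ?q ^ ?n \<le> real (N choose t) * real m ^ ?n"
    by (metis of_nat_le_iff of_nat_mult of_nat_power)
  moreover have "real ?q ^ ?n > 0" by simp
  ultimately have "real (N choose t) * (real m / real ?q) ^ ?n \<ge> real s + 1"
    by (simp add: power_divide field_simps)
  with hyp show False by simp
qed


lemma esym_reindex:
  fixes S S' :: "'r::comm_ring_1 list"
  assumes "inj_on f I'" "\<And>j. j \<in> I' \<Longrightarrow> S' ! j = S ! f j"
  shows "esym_pos m S' I' = esym_pos m S (f ` I')"
proof -
  have seteq: "{J. J \<subseteq> f ` I' \<and> card J = m} = (image f) ` {J. J \<subseteq> I' \<and> card J = m}"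
  proof (intro equalityI subsetI)
    fix J assume "J \<in> {J. J \<subseteq> f ` I' \<and> card J = m}"
    then have J: "J \<subseteq> f ` I'" "card J = m" by auto
    define J0 where "J0 = I' \<inter> f -` J"
    have "f ` J0 = J" using J(1) by (auto simp: J0_def)
    moreover have "inj_on f J0" using assms(1) by (rule inj_on_subset) (auto simp: J0_def)
    ultimately have "card J0 = m" using J(2) card_image[of f J0] by simp
    moreover have "J0 \<subseteq> I'" by (auto simp: J0_def)
    ultimately show "J \<in> (image f) ` {J. J \<subseteq> I' \<and> card J = m}" using \<open>f ` J0 = J\<close> by blast
  next
    fix J assume "J \<in> (image f) ` {J. J \<subseteq> I' \<and> card J = m}"
    then obtain J0 where "J = f ` J0" "J0 \<subseteq> I'" "card J0 = m" by auto
    moreover have "inj_on f J0" using assms(1) \<open>J0 \<subseteq> I'\<close> by (rule inj_on_subset)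
    ultimately show "J \<in> {J. J \<subseteq> f ` I' \<and> card J = m}" using card_image[of f J0] by auto
  qed
  have inj: "inj_on (image f) {J. J \<subseteq> I' \<and> card J = m}"
    by (rule inj_on_subset[OF inj_on_image_Pow[OF assms(1)]]) auto
  have "esym_pos m S (f ` I') = (\<Sum>J\<in>{J. J \<subseteq> I' \<and> card J = m}. \<Prod>j\<in>f ` J. S ! j)"
    unfolding esym_pos_def seteq by (rule sum.reindex[OF inj, unfolded comp_def])
  also have "\<dots> = (\<Sum>J\<in>{J. J \<subseteq> I' \<and> card J = m}. \<Prod>j\<in>J. S' ! j)"
  proof (rule sum.cong[OF refl])
    fix J assume J: "J \<in> {J. J \<subseteq> I' \<and> card J = m}"
    then have "inj_on f J" using inj_on_subset[OF assms(1)] by simp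
    then have "(\<Prod>j\<in>f ` J. S ! j) = (\<Prod>j\<in>J. S ! f j)" by (simp add: prod.reindex)
    also have "\<dots> = (\<Prod>j\<in>J. S' ! j)" using J assms(2) by (intro prod.cong) auto
    finally show "(\<Prod>j\<in>f ` J. S ! j) = (\<Prod>j\<in>J. S' ! j)" .
  qed
  finally show ?thesis unfolding esym_pos_def by simp
qed

lemma deletion:
  fixes S :: "'r::comm_ring_1 list"
  assumes "card {I. I \<subseteq> {..<length S} \<and> card I = t \<and> esym_pos m S I = 0} \<le> s"
    and "t > 0" and "length S \<ge> l + s"
  shows "\<exists>S'::'r list. length S' \<ge> l \<and> (\<forall>I. I \<subseteq> {..<length S'} \<and> card I = t \<longrightarrow> esym_pos m S' I \<noteq> 0)"
proof -
  let ?N = "length S"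
  define Bad where "Bad = {I. I \<subseteq> {..<?N} \<and> card I = t \<and> esym_pos m S I = 0}"
  define D where "D = (\<lambda>I. SOME x. x \<in> I) ` Bad"
  have finBad: "finite Bad" unfolding Bad_def
    by (rule finite_subset[of _ "Pow {..<?N}"]) auto
  have cD: "card D \<le> s" using card_image_le[OF finBad, of "\<lambda>I. SOME x. x \<in> I"] assms(1)
    unfolding D_def Bad_def by linarith
  have finD: "finite D" unfolding D_def using finBad by simp
  have hit: "\<exists>x\<in>D. x \<in> I" if "I \<in> Bad" for I
  proof -
    have "I \<noteq> {}" using that assms(2) by (auto simp: Bad_def)
    then have "(SOME x. x \<in> I) \<in> I" by (simp add: some_in_eq)
    then show ?thesis using that unfolding D_def by blast
  qed
  define P where "P = {..<?N} - D"
  have finP: "finite P" by (simp add: P_def)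
  have "card P = ?N - card ({..<?N} \<inter> D)" by (simp add: P_def card_Diff_subset_Int finD)
  moreover have "card ({..<?N} \<inter> D) \<le> card D" by (rule card_mono[OF finD]) auto
  ultimately have "card P \<ge> ?N - card D" by linarith
  then have cP: "card P \<ge> l" using cD assms(3) by linarith
  obtain f where f: "bij_betw f {0..<card P} P" using ex_bij_betw_nat_finite[OF finP] by blast
  define S' where "S' = map (\<lambda>j. S ! f j) [0..<card P]"
  have "length S' \<ge> l" using cP by (simp add: S'_def)
  moreover have "esym_pos m S' I \<noteq> 0" if I: "I \<subseteq> {..<length S'}" "card I = t" for I
  proof
    assume z: "esym_pos m S' I = 0"
    have I2: "I \<subseteq> {0..<card P}" using I by (auto simp: S'_def)
    have inj: "inj_on f I" by (rule inj_on_subset[OF bij_betw_imp_inj_on[OF f] I2])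
    have "esym_pos m S' I = esym_pos m S (f ` I)"
      by (rule esym_reindex[OF inj]) (use I2 in \<open>auto simp: S'_def\<close>)
    moreover have fIP: "f ` I \<subseteq> P" using bij_betw_imp_surj_on[OF f] I2 by blast
    moreover have "card (f ` I) = t" using inj I by (simp add: card_image)
    moreover have "f ` I \<subseteq> {..<?N}" using fIP unfolding P_def by blast
    ultimately have "f ` I \<in> Bad" using z unfolding Bad_def by simp
    then obtain x where "x \<in> D" "x \<in> f ` I" using hit by blast
    then show False using fIP unfolding P_def by blast
  qed
  ultimately show ?thesis by (intro exI[of _ S']) simp
qed


theorem theorem2p5:
  fixes q n t m l :: nat
  assumes "CARD('a::{field,finite}) = q"
    and "CARD('n::finite) = n"
    and "\<exists>p k. prime p \<and> k > 0 \<and> q = p ^ k"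
    and "n > 0" and "t > 0" and "m > 0" and "t \<ge> m" and "l > 0"
    and "\<exists>s::nat. real ((l + s) choose t) * (real m / real q) ^ n < real s + 1"
  shows "EGZ t TYPE('a ^ 'n) m > enat l"
proof -
  obtain s :: nat where hs: "real ((l + s) choose t) * (real m / real q) ^ n < real s + 1"
    using assms(9) by blast
  define N where "N = l + s"
  have hyp: "real (N choose t) * (real m / real CARD('a)) ^ CARD('n) < real s + 1"
    using hs assms(1,2) by (simp add: N_def)
  have N1: "N \<ge> 1" using assms(8) by (simp add: N_def)
  obtain h where h: "h \<in> (Seqs N :: ('n \<Rightarrow> nat \<Rightarrow> 'a) set)"
    "card {I. I \<subseteq> {..<N} \<and> card I = t \<and> esym_pos m (toS N h) I = 0} \<le> s"
    using exists_good[OF N1 _ assms(7) hyp] assms(6) by auto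
  define S where "S = toS N h"
  have lenS: "length S = N" by (simp add: S_def toS_def)
  obtain S' :: "('a ^ 'n) list" where S': "length S' \<ge> l"
    "\<And>I. I \<subseteq> {..<length S'} \<Longrightarrow> card I = t \<Longrightarrow> esym_pos m S' I \<noteq> 0"
    using deletion[of S t m s l] h(2) assms(5) lenS unfolding S_def N_def by auto
  have notprop: "\<not> EGZ_prop t TYPE('a ^ 'n) m L" if "L \<le> l" for L
  proof
    assume "EGZ_prop t TYPE('a ^ 'n) m L"
    then have "\<exists>I. I \<subseteq> {..<length S'} \<and> card I = t \<and> esym_pos m S' I = 0"
      unfolding EGZ_prop_def using S'(1) that by auto
    then show False using S'(2) by blast
  qed
  show ?thesis
  proof (cases "\<exists>L>0. EGZ_prop t TYPE('a ^ 'n) m L")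
    case True
    then have "0 < (LEAST L. L > 0 \<and> EGZ_prop t TYPE('a ^ 'n) m L) \<and>
        EGZ_prop t TYPE('a ^ 'n) m (LEAST L. L > 0 \<and> EGZ_prop t TYPE('a ^ 'n) m L)"
      by (rule LeastI_ex)
    then have "(LEAST L. L > 0 \<and> EGZ_prop t TYPE('a ^ 'n) m L) > l"
      using notprop by (meson not_le)
    then show ?thesis using True by (simp add: EGZ_def)
  next
    case False
    show ?thesis unfolding EGZ_def if_not_P[OF False] by simp
  qed
qed

end
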